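(* For every positive integer $\ell$ and every real $\gamma\ge0$, \[ \sum_{d\mid \ell}c_\ell(d)\,d^{\gamma}\le\prod_{p^n\| \ell}(p^{-\gamma}+p^{\gamma})^n . \]
   Context: The Chebyshev coefficients $c_{j,n}$ ($0\le j\le n$) are defined by $x^n=\sum_{j=0}^n c_{j,n}U_j(x/2)$, with $U_j$ the Chebyshev polynomials of the second kind ($(1-2yx+x^2)^{-1}=\sum_{j\ge0}U_j(y)x^j$). For $d\mid\ell$, $c_\ell(d)=\prod_{p\mid\ell} c_{j_p,n_p}$ where $p^{j_p}\| d$ and $p^{n_p}\|\ell$. *)

theory Defs
  imports Complex_Main "HOL-Computational_Algebra.Primes"
begin

text \<open>Chebyshev polynomials of the second kind, U_0 = 1, U_1 = 2y,
  U_(j+2) = 2y U_(j+1) - U_j; these are exactly the coefficients of the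
  generating function 1/(1 - 2yx + x^2).\<close>
fun chebU :: "nat \<Rightarrow> real \<Rightarrow> real" where
  "chebU 0 y = 1"
| "chebU (Suc 0) y = 2 * y"
| "chebU (Suc (Suc j)) y = 2 * y * chebU (Suc j) y - chebU j y"

definition chebCoeffs :: "nat \<Rightarrow> (nat \<Rightarrow> real)" where
  "chebCoeffs n = (THE c. (\<forall>j>n. c j = 0) \<and>
      (\<forall>x::real. x ^ n = (\<Sum>j\<le>n. c j * chebU j (x / 2))))"

definition chebC :: "nat \<Rightarrow> nat \<Rightarrow> real" where
  "chebC j n = chebCoeffs n j"

definition cell :: "nat \<Rightarrow> nat \<Rightarrow> real" where
  "cell l d = (\<Prod>p\<in>prime_factors l. chebC (multiplicity p d) (multiplicity p l))"

end

theory Submission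
  imports Defs "HOL-Computational_Algebra.Polynomial" "HOL-Library.FuncSet"
begin

fun cc :: "nat \<Rightarrow> nat \<Rightarrow> real" where
  "cc 0 j = (if j = 0 then 1 else 0)"
| "cc (Suc n) j = (if j = 0 then 0 else cc n (j - 1)) + cc n (j + 1)"

lemma cc_zero: "j > n \<Longrightarrow> cc n j = 0"
  by (induction n arbitrary: j) auto

lemma cc_nonneg: "cc n j \<ge> 0"
  by (induction n arbitrary: j) auto

lemma chebU_rec: "x * chebU j (x/2) = chebU (Suc j) (x/2) + (if j = 0 then 0 else chebU (j - 1) (x/2))"
  by (cases j) auto

lemma cc_expand: "x ^ n = (\<Sum>j\<le>n. cc n j * chebU j (x / 2))"
proof (induction n)
  case 0 then show ?case by simp
next
  case (Suc n)
  define u where "u j = chebU j (x/2)" for j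
  have IH: "x ^ n = (\<Sum>j\<le>n. cc n j * u j)" using Suc u_def by simp
  have "(\<Sum>j\<le>Suc n. cc (Suc n) j * u j) =
     (\<Sum>j\<le>Suc n. (if j = 0 then 0 else cc n (j - 1)) * u j) + (\<Sum>j\<le>Suc n. cc n (j + 1) * u j)"
    by (simp add: sum.distrib algebra_simps)
  also have "(\<Sum>j\<le>Suc n. (if j = 0 then 0 else cc n (j - 1)) * u j) = (\<Sum>i\<le>n. cc n i * u (Suc i))"
    by (subst sum.atMost_Suc_shift) simp
  also have "(\<Sum>j\<le>Suc n. cc n (j + 1) * u j) = (\<Sum>j\<le>n. cc n (j + 1) * u j)"
    by (simp add: cc_zero)
  also have "\<dots> = (\<Sum>i\<le>Suc n. (if i = 0 then 0 else cc n i * u (i - 1)))"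
    by (subst sum.atMost_Suc_shift) simp
  also have "\<dots> = (\<Sum>i\<le>n. (if i = 0 then 0 else cc n i * u (i - 1)))"
    by (simp add: cc_zero)
  also have "(\<Sum>i\<le>n. cc n i * u (Suc i)) + \<dots> = (\<Sum>i\<le>n. cc n i * (x * u i))"
    unfolding sum.distrib[symmetric] by (rule sum.cong) (auto simp: u_def chebU_rec algebra_simps)
  also have "\<dots> = x ^ Suc n" by (simp add: IH sum_distrib_left algebra_simps)
  finally show ?case by (simp add: u_def)
qed

fun chebP :: "nat \<Rightarrow> real poly" where
  "chebP 0 = 1"
| "chebP (Suc 0) = [:0, 1:]"
| "chebP (Suc (Suc j)) = pCons 0 (chebP (Suc j)) - chebP j"

lemma poly_chebP: "poly (chebP j) x = chebU j (x / 2)"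
  by (induction j rule: chebP.induct) auto

lemma coeff_chebP: "coeff (chebP j) j = 1 \<and> (\<forall>k>j. coeff (chebP j) k = 0)"
proof (induction j rule: chebP.induct)
  case 1 then show ?case by (auto simp: coeff_1)
next
  case 2 then show ?case by (auto simp: coeff_pCons split: nat.splits)
next
  case (3 j)
  show ?case
  proof (intro conjI allI impI)
    show "coeff (chebP (Suc (Suc j))) (Suc (Suc j)) = 1" using 3 by simp
    fix k assume "k > Suc (Suc j)"
    then show "coeff (chebP (Suc (Suc j))) k = 0" using 3
      by (cases k) auto
  qed
qed

lemma uniq_aux: "(\<Sum>j\<le>m. smult (a j) (chebP j)) = 0 \<Longrightarrow> \<forall>j\<le>m. a j = 0"
proof (induction m)
  case 0 then show ?case using coeff_chebP[of 0] by simp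
next
  case (Suc m)
  have "coeff (\<Sum>j\<le>Suc m. smult (a j) (chebP j)) (Suc m) = (\<Sum>j\<le>Suc m. a j * coeff (chebP j) (Suc m))"
    by (simp add: coeff_sum)
  also have "\<dots> = (\<Sum>j\<le>m. a j * coeff (chebP j) (Suc m)) + a (Suc m)"
    using coeff_chebP[of "Suc m"] by simp
  also have "(\<Sum>j\<le>m. a j * coeff (chebP j) (Suc m)) = 0"
    by (rule sum.neutral) (use coeff_chebP in auto)
  finally have "coeff (\<Sum>j\<le>Suc m. smult (a j) (chebP j)) (Suc m) = a (Suc m)" by simp
  hence am: "a (Suc m) = 0" using Suc.prems by (metis coeff_0)
  hence "(\<Sum>j\<le>m. smult (a j) (chebP j)) = 0" using Suc.prems by simp
  with Suc.IH am show ?case by (auto simp: le_Suc_eq)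
qed

lemma chebCoeffs_eq: "chebCoeffs n = cc n"
  unfolding chebCoeffs_def
proof (rule the_equality)
  show "(\<forall>j>n. cc n j = 0) \<and> (\<forall>x. x ^ n = (\<Sum>j\<le>n. cc n j * chebU j (x / 2)))"
    using cc_zero cc_expand by blast
next
  fix c assume c: "(\<forall>j>n. c j = 0) \<and> (\<forall>x::real. x ^ n = (\<Sum>j\<le>n. c j * chebU j (x / 2)))"
  have "\<forall>x. poly (\<Sum>j\<le>n. smult (c j - cc n j) (chebP j)) x = 0"
  proof
    fix x :: real
    have "poly (\<Sum>j\<le>n. smult (c j - cc n j) (chebP j)) x
       = (\<Sum>j\<le>n. c j * chebU j (x / 2)) - (\<Sum>j\<le>n. cc n j * chebU j (x / 2))"
      by (simp add: poly_sum poly_chebP sum_subtractf algebra_simps)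
    also have "\<dots> = 0" using c cc_expand[of x n] by simp
    finally show "poly (\<Sum>j\<le>n. smult (c j - cc n j) (chebP j)) x = 0" .
  qed
  note allx = this
  have P0: "(\<Sum>j\<le>n. smult (c j - cc n j) (chebP j)) = 0"
    using allx poly_all_0_iff_0 by metis
  have D: "\<forall>j\<le>n. c j - cc n j = 0" by (rule uniq_aux[OF P0])
  show "c = cc n"
  proof (rule ext)
    fix j show "c j = cc n j"
    proof (cases "j \<le> n")
      case True then show ?thesis using D by simp
    next
      case False then show ?thesis using c cc_zero by simp
    qed
  qed
qed

lemma chebC_eq: "chebC j n = cc n j"
  by (simp add: chebC_def chebCoeffs_eq)

lemma U_bound_aux:
  fixes q :: real assumes q: "q \<ge> 1"
  shows "chebU (Suc j) ((q + 1/q)/2) \<ge> q * chebU j ((q + 1/q)/2) \<and> chebU j ((q + 1/q)/2) \<ge> q ^ j"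
proof (induction j)
  case 0 then show ?case using q by simp
next
  case (Suc j)
  define y where "y = (q + 1/q)/2"
  have a: "chebU (Suc j) y \<ge> q * chebU j y" and b: "chebU j y \<ge> q ^ j" using Suc unfolding y_def by auto
  have qp: "q > 0" using q by simp
  have c: "chebU j y \<le> chebU (Suc j) y / q" using a qp by (simp add: field_simps)
  have "chebU (Suc (Suc j)) y = (q + 1/q) * chebU (Suc j) y - chebU j y" by (simp add: y_def)
  also have "\<dots> \<ge> (q + 1/q) * chebU (Suc j) y - chebU (Suc j) y / q" using c by linarith
  finally have d: "chebU (Suc (Suc j)) y \<ge> q * chebU (Suc j) y" by (simp add: field_simps)
  have "q * chebU j y \<ge> q * q ^ j" using b qp by simp
  hence "chebU (Suc j) y \<ge> q ^ Suc j" using a by simp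
  with d show ?case by (simp add: y_def)
qed

lemma prime_bound:
  fixes q :: real assumes q: "q \<ge> 1"
  shows "(\<Sum>j\<le>n. cc n j * q ^ j) \<le> (1/q + q) ^ n"
proof -
  have "(\<Sum>j\<le>n. cc n j * q ^ j) \<le> (\<Sum>j\<le>n. cc n j * chebU j ((q + 1/q)/2))"
    by (intro sum_mono mult_left_mono) (use U_bound_aux[OF q] cc_nonneg in auto)
  also have "\<dots> = (q + 1/q) ^ n" using cc_expand[of "q + 1/q" n] by simp
  finally show ?thesis by (simp add: add.commute)
qed

theorem lemma6p1:
  fixes l :: nat and \<gamma> :: real
  assumes "l > 0" and "\<gamma> \<ge> 0"
  shows "(\<Sum>d | d dvd l. cell l d * real d powr \<gamma>)
           \<le> (\<Prod>p\<in>prime_factors l. (real p powr (-\<gamma>) + real p powr \<gamma>) ^ multiplicity p l)"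
proof -
  define S where "S = prime_factors l"
  define F where "F p = {..multiplicity p l}" for p :: nat
  define g :: "(nat \<Rightarrow> nat) \<Rightarrow> nat" where "g f = (\<Prod>p\<in>S. p ^ f p)" for f :: "nat \<Rightarrow> nat"
  define h :: "nat \<Rightarrow> nat \<Rightarrow> nat" where "h d = restrict (\<lambda>p. multiplicity p d) S" for d :: nat
  have finS: "finite S" and primeS: "\<And>p. p \<in> S \<Longrightarrow> prime p" unfolding S_def by auto
  have multg: "multiplicity p (g f) = f p" if "p \<in> S" for p f
    unfolding g_def using multiplicity_prod_prime_powers[OF finS primeS, of p f] primeS that by auto
  have l_eq: "l = (\<Prod>p\<in>S. p ^ multiplicity p l)" unfolding S_def using prime_factorization_nat[OF assms(1)] by simp
  have bij: "bij_betw g (PiE S F) {d. d dvd l}"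
  proof -
    have L: "\<forall>f\<in>PiE S F. h (g f) = f"
    proof
      fix f assume f: "f \<in> PiE S F"
      show "h (g f) = f"
      proof
        fix p show "h (g f) p = f p"
          proof (cases "p \<in> S")
          case True
          have "h (g f) p = multiplicity p (g f)" using True by (simp add: h_def)
          also have "\<dots> = f p" by (rule multg[OF True])
          finally show ?thesis .
        next
          case False
          have "h (g f) p = undefined" using False by (simp add: h_def)
          also have "\<dots> = f p" by (rule PiE_arb[OF f False, symmetric])
          finally show ?thesis .
        qed
      qed
    qed
    have R: "\<forall>d\<in>{d. d dvd l}. g (h d) = d"
    proof
      fix d assume "d \<in> {d. d dvd l}"
      hence d: "d dvd l" by simp
      have d0: "d > 0" using d assms(1) by (intro Nat.gr0I) auto
      have sub: "prime_factors d \<subseteq> S" unfolding S_def using d assms(1) by (intro dvd_prime_factors) auto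
      have "g (h d) = (\<Prod>p\<in>S. p ^ multiplicity p d)" unfolding g_def h_def by simp
      also have "\<dots> = (\<Prod>p\<in>prime_factors d. p ^ multiplicity p d)"
      proof (rule prod.mono_neutral_right[OF finS sub], intro ballI)
        fix p assume "p \<in> S - prime_factors d"
        hence "multiplicity p d = 0" using primeS d0 by (auto simp: prime_factors_multiplicity)
        thus "p ^ multiplicity p d = 1" by simp
      qed
      also have "\<dots> = d" using prime_factorization_nat[OF d0] by simp
      finally show "g (h d) = d" .
    qed
    have I1: "g ` PiE S F \<subseteq> {d. d dvd l}"
    proof
      fix d assume "d \<in> g ` PiE S F"
      then obtain f where f: "f \<in> PiE S F" and dg: "d = g f" by auto
      have "g f dvd (\<Prod>p\<in>S. p ^ multiplicity p l)" unfolding g_def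
        by (rule prod_dvd_prod, rule le_imp_power_dvd) (use f in \<open>auto simp: F_def\<close>)
      thus "d \<in> {d. d dvd l}" using dg l_eq by simp
    qed
    have I2: "h ` {d. d dvd l} \<subseteq> PiE S F"
    proof
      fix f assume "f \<in> h ` {d. d dvd l}"
      then obtain d where d: "d dvd l" and fh: "f = h d" by auto
      have "multiplicity p d \<le> multiplicity p l" for p
        using dvd_imp_multiplicity_le[OF d] assms(1) by simp
      thus "f \<in> PiE S F" unfolding fh h_def F_def by auto
    qed
    show ?thesis by (rule bij_betw_byWitness[OF L R I1 I2])
  qed
  define q where "q p = real p powr \<gamma>" for p :: nat
  have q1: "q p \<ge> 1" if "p \<in> S" for p
  proof -
    have "p \<ge> 1" using prime_ge_1_nat[OF primeS[OF that]] .
    hence "real p \<ge> 1" by simp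
    thus ?thesis unfolding q_def using assms(2) by (simp add: ge_one_powr_ge_zero)
  qed
  have "(\<Sum>d | d dvd l. cell l d * real d powr \<gamma>) = (\<Sum>f\<in>PiE S F. cell l (g f) * real (g f) powr \<gamma>)"
    by (rule sum.reindex_bij_betw[OF bij, symmetric])
  also have "\<dots> = (\<Sum>f\<in>PiE S F. \<Prod>p\<in>S. cc (multiplicity p l) (f p) * q p ^ f p)"
  proof (rule sum.cong[OF refl])
    fix f assume f: "f \<in> PiE S F"
    have "cell l (g f) = (\<Prod>p\<in>S. cc (multiplicity p l) (f p))"
      unfolding cell_def S_def[symmetric] chebC_eq by (rule prod.cong) (auto simp: multg)
    moreover have "real (g f) powr \<gamma> = (\<Prod>p\<in>S. q p ^ f p)"
    proof -
      have "real (g f) powr \<gamma> = (\<Prod>p\<in>S. (real p ^ f p) powr \<gamma>)"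
        unfolding g_def by (simp add: prod_powr_distrib)
      also have "\<dots> = (\<Prod>p\<in>S. q p ^ f p)"
      proof (rule prod.cong[OF refl])
        fix p assume "p \<in> S"
        hence pp: "real p > 0" using primeS prime_gt_0_nat by auto
        have "(real p ^ f p) powr \<gamma> = (real p powr real (f p)) powr \<gamma>" using pp by (simp add: powr_realpow)
        also have "\<dots> = real p powr (real (f p) * \<gamma>)" by (simp add: powr_powr)
        also have "\<dots> = q p ^ f p" unfolding q_def using pp by (simp add: powr_power)
        finally show "(real p ^ f p) powr \<gamma> = q p ^ f p" .
      qed
      finally show ?thesis .
    qed
    ultimately show "cell l (g f) * real (g f) powr \<gamma> = (\<Prod>p\<in>S. cc (multiplicity p l) (f p) * q p ^ f p)"
      by (simp add: prod.distrib)
  qed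
  also have "\<dots> = (\<Prod>p\<in>S. \<Sum>j\<in>F p. cc (multiplicity p l) j * q p ^ j)"
    by (rule prod_sum_PiE[symmetric]) (auto simp: finS F_def)
  also have "\<dots> \<le> (\<Prod>p\<in>S. (1 / q p + q p) ^ multiplicity p l)"
  proof (rule prod_mono, intro conjI)
    fix p assume p: "p \<in> S"
    have q0: "q p \<ge> 0" by (simp add: q_def)
    show "0 \<le> (\<Sum>j\<in>F p. cc (multiplicity p l) j * q p ^ j)"
      by (intro sum_nonneg mult_nonneg_nonneg cc_nonneg zero_le_power q0)
    show "(\<Sum>j\<in>F p. cc (multiplicity p l) j * q p ^ j) \<le> (1 / q p + q p) ^ multiplicity p l"
      unfolding F_def by (rule prime_bound[OF q1[OF p]])
  qed
  also have "\<dots> = (\<Prod>p\<in>prime_factors l. (real p powr (-\<gamma>) + real p powr \<gamma>) ^ multiplicity p l)"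
    unfolding S_def q_def by (simp add: powr_minus_divide)
  finally show ?thesis .
qed

end
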